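(* In the free group $\mathbb{F}_2$ on $a,b$, set $a_0:=b^{-1}$, $b_0:=aba^{-1}$ and recursively $a_n:=a_{n-1}b_{n-1}$, $b_n:=a_{n-1}^{-1}b_{n-1}^{-1}$ for $n\ge1$. For $w\in\mathbb{F}_2$ let $\gamma(w):=\max\{m\mid w\in\gamma_m(\mathbb{F}_2)\}$. Then $\gamma(a_n)=\gamma(b_n)$ for all $n\in\mathbb{N}$.
   Context: $\gamma_m(\mathbb{F}_2)$ denotes the $m$-th term of the lower central series: $\gamma_1(\mathbb{F}_2)=\mathbb{F}_2$, $\gamma_{m+1}(\mathbb{F}_2)=[\gamma_m(\mathbb{F}_2),\mathbb{F}_2]$. *)

theory Defs
  imports "HOL-Algebra.Algebra" "HOL-Library.Extended_Nat"
begin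

text \<open>A letter is a pair (g, e): g = False means generator a, g = True means b;
  e = True means the letter is the inverse of the generator.\<close>

type_synonym letter = "bool \<times> bool"

definition inv_letter :: "letter \<Rightarrow> letter" where
  "inv_letter l = (fst l, \<not> snd l)"

fun cons_red :: "letter \<Rightarrow> letter list \<Rightarrow> letter list" where
  "cons_red x [] = [x]"
| "cons_red x (y # ys) = (if y = inv_letter x then ys else x # y # ys)"

definition reduce :: "letter list \<Rightarrow> letter list" where
  "reduce xs = foldr cons_red xs []"

definition reduced :: "letter list \<Rightarrow> bool" where
  "reduced xs \<longleftrightarrow> (\<forall>i. Suc i < length xs \<longrightarrow> xs ! Suc i \<noteq> inv_letter (xs ! i))"

definition F2 :: "letter list monoid" where
  "F2 = \<lparr> carrier = {w. reduced w}, monoid.mult = (\<lambda>x y. reduce (x @ y)), one = [] \<rparr>"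

definition gen_a :: "letter list" where "gen_a = [(False, False)]"
definition gen_b :: "letter list" where "gen_b = [(True, False)]"

text \<open>Lower central series: lcs_aux k = gamma_(k+1)(F_2).\<close>
primrec lcs_aux :: "nat \<Rightarrow> letter list set" where
  "lcs_aux 0 = carrier F2"
| "lcs_aux (Suc k) = generate F2
     {x \<otimes>\<^bsub>F2\<^esub> y \<otimes>\<^bsub>F2\<^esub> inv\<^bsub>F2\<^esub> x \<otimes>\<^bsub>F2\<^esub> inv\<^bsub>F2\<^esub> y | x y. x \<in> lcs_aux k \<and> y \<in> carrier F2}"

definition lcs :: "nat \<Rightarrow> letter list set" where
  "lcs m = lcs_aux (m - 1)"

text \<open>gamma(w) = max {m \<ge> 1 | w \<in> gamma_m(F_2)}, taken as a supremum in enat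
  (it equals the maximum whenever the maximum exists, and is \<infinity> for w = 1).\<close>
definition gamma_deg :: "letter list \<Rightarrow> enat" where
  "gamma_deg w = Sup {enat m | m. 1 \<le> m \<and> w \<in> lcs m}"

fun ab_seq :: "nat \<Rightarrow> letter list \<times> letter list" where
  "ab_seq 0 = (inv\<^bsub>F2\<^esub> gen_b, gen_a \<otimes>\<^bsub>F2\<^esub> gen_b \<otimes>\<^bsub>F2\<^esub> inv\<^bsub>F2\<^esub> gen_a)"
| "ab_seq (Suc n) = (fst (ab_seq n) \<otimes>\<^bsub>F2\<^esub> snd (ab_seq n),
                     inv\<^bsub>F2\<^esub> (fst (ab_seq n)) \<otimes>\<^bsub>F2\<^esub> inv\<^bsub>F2\<^esub> (snd (ab_seq n)))"

definition a_seq :: "nat \<Rightarrow> letter list" where "a_seq n = fst (ab_seq n)"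
definition b_seq :: "nat \<Rightarrow> letter list" where "b_seq n = snd (ab_seq n)"

end

theory Submission
  imports Defs
begin

fun red :: "letter list \<Rightarrow> bool" where
  "red [] = True"
| "red [x] = True"
| "red (x # y # ys) = (y \<noteq> inv_letter x \<and> red (y # ys))"

lemma reduced_Cons2: "reduced (x # y # ys) = (y \<noteq> inv_letter x \<and> reduced (y # ys))"
  unfolding reduced_def
  apply (rule iffI)
   apply (intro conjI)
    apply (metis Suc_less_eq length_Cons nth_Cons_0 nth_Cons_Suc zero_less_Suc)
   apply (metis Suc_less_eq length_Cons nth_Cons_Suc)
  apply clarify
  subgoal for i by (cases i) auto
  done

lemma reduced_red: "reduced xs = red xs"
proof (induction xs rule: red.induct)
  case 1 then show ?case by (simp add: reduced_def)
next
  case (2 x) then show ?case by (simp add: reduced_def)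
next
  case (3 x y ys) then show ?case by (simp add: reduced_Cons2)
qed

lemma inv_inv_letter[simp]: "inv_letter (inv_letter x) = x"
  by (simp add: inv_letter_def)

lemma inv_letter_neq[simp]: "inv_letter x \<noteq> x" "x \<noteq> inv_letter x"
  by (cases x, simp add: inv_letter_def)+

lemma red_tl: "red (x # ys) \<Longrightarrow> red ys"
  by (cases ys) auto

lemma red_cons_red: "red ys \<Longrightarrow> red (cons_red x ys)"
proof (cases ys)
  case Nil then show ?thesis by simp
next
  case (Cons y zs)
  assume "red ys"
  then show ?thesis using Cons by (auto intro: red_tl)
qed

lemma red_foldr: "red acc \<Longrightarrow> red (foldr cons_red xs acc)"
  by (induction xs) (auto intro: red_cons_red)

lemma cons_red_cancel: "red acc \<Longrightarrow> cons_red x (cons_red (inv_letter x) acc) = acc"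
proof (cases acc)
  case Nil then show ?thesis by simp
next
  case (Cons y ys)
  assume r: "red acc"
  show ?thesis
  proof (cases "y = x")
    case True
    then show ?thesis using Cons r by (cases ys) auto
  next
    case False
    then show ?thesis using Cons by auto
  qed
qed

lemma foldr_cons_red: "red acc \<Longrightarrow>
  foldr cons_red (cons_red x ys) acc = cons_red x (foldr cons_red ys acc)"
proof (cases ys)
  case Nil then show ?thesis by simp
next
  case (Cons y zs)
  assume r: "red acc"
  show ?thesis
  proof (cases "y = inv_letter x")
    case True
    then show ?thesis using Cons r cons_red_cancel[OF red_foldr[OF r], of x zs] by simp
  next
    case False then show ?thesis using Cons by simp
  qed
qed

lemma foldr_foldr: "red acc \<Longrightarrow>
  foldr cons_red (foldr cons_red xs ys) acc = foldr cons_red xs (foldr cons_red ys acc)"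
  by (induction xs) (simp_all add: foldr_cons_red)

lemma reduce_red: "red (reduce xs)"
  unfolding reduce_def by (rule red_foldr) simp

lemma reduce_id: "red w \<Longrightarrow> reduce w = w"
  unfolding reduce_def
proof (induction w rule: red.induct)
  case (3 x y ys) then show ?case by simp
qed simp_all

lemma reduce_assoc: "reduce (reduce (x @ y) @ z) = reduce (x @ reduce (y @ z))"
proof -
  have "reduce (reduce (x @ y) @ z) = foldr cons_red (x @ y) (reduce z)"
    unfolding reduce_def using foldr_foldr[of "foldr cons_red z []" "x @ y" "[]"] red_foldr[of "[]" z]
    by simp
  moreover have "reduce (x @ reduce (y @ z)) = foldr cons_red x (reduce (y @ z))"
    unfolding reduce_def using foldr_foldr[of "[]" "y @ z" "[]"]
    by simp
  ultimately show ?thesis by (simp add: reduce_def)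
qed

definition inv_word :: "letter list \<Rightarrow> letter list" where
  "inv_word w = rev (map inv_letter w)"

lemma foldr_cancel: "red acc \<Longrightarrow> foldr cons_red (xs @ inv_word xs) acc = acc"
proof (induction xs arbitrary: acc)
  case Nil then show ?case by (simp add: inv_word_def)
next
  case (Cons x xs)
  have "foldr cons_red ((x # xs) @ inv_word (x # xs)) acc
      = cons_red x (foldr cons_red (xs @ inv_word xs) (cons_red (inv_letter x) acc))"
    by (simp add: inv_word_def)
  also have "\<dots> = cons_red x (cons_red (inv_letter x) acc)"
    using Cons by (simp add: red_cons_red)
  also have "\<dots> = acc" using Cons.prems by (rule cons_red_cancel)
  finally show ?case .
qed

lemma inv_word_inv_word: "inv_word (inv_word w) = w"
  by (simp add: inv_word_def rev_map comp_def)

lemma F2_group: "group F2"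
proof (rule groupI)
  show "\<And>x y. x \<in> carrier F2 \<Longrightarrow> y \<in> carrier F2 \<Longrightarrow> x \<otimes>\<^bsub>F2\<^esub> y \<in> carrier F2"
    by (simp add: F2_def reduced_red reduce_red)
  show "\<one>\<^bsub>F2\<^esub> \<in> carrier F2" by (simp add: F2_def reduced_red)
  show "\<And>x y z. x \<in> carrier F2 \<Longrightarrow> y \<in> carrier F2 \<Longrightarrow> z \<in> carrier F2 \<Longrightarrow>
      x \<otimes>\<^bsub>F2\<^esub> y \<otimes>\<^bsub>F2\<^esub> z = x \<otimes>\<^bsub>F2\<^esub> (y \<otimes>\<^bsub>F2\<^esub> z)"
    by (simp add: F2_def reduce_assoc)
  show "\<And>x. x \<in> carrier F2 \<Longrightarrow> \<one>\<^bsub>F2\<^esub> \<otimes>\<^bsub>F2\<^esub> x = x"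
    by (simp add: F2_def reduced_red reduce_id)
  show "\<exists>y\<in>carrier F2. y \<otimes>\<^bsub>F2\<^esub> x = \<one>\<^bsub>F2\<^esub>" if "x \<in> carrier F2" for x
  proof (intro bexI)
    have "reduce (reduce (inv_word x) @ x) = reduce (inv_word x @ x)"
      unfolding reduce_def using foldr_foldr[of "foldr cons_red x []" "inv_word x" "[]"] red_foldr[of "[]" x]
      by simp
    then show "reduce (inv_word x) \<otimes>\<^bsub>F2\<^esub> x = \<one>\<^bsub>F2\<^esub>"
      using foldr_cancel[of "[]" "inv_word x"]
      by (simp add: F2_def reduce_def inv_word_inv_word)
    show "reduce (inv_word x) \<in> carrier F2"
      by (simp add: F2_def reduced_red reduce_red)
  qed
qed

interpretation F: group F2 by (rule F2_group)

lemma canc: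
  assumes "g \<in> carrier F2" "z \<in> carrier F2"
  shows "inv\<^bsub>F2\<^esub> g \<otimes>\<^bsub>F2\<^esub> (g \<otimes>\<^bsub>F2\<^esub> z) = z"
        "g \<otimes>\<^bsub>F2\<^esub> (inv\<^bsub>F2\<^esub> g \<otimes>\<^bsub>F2\<^esub> z) = z"
  using assms by (simp_all flip: F.m_assoc)

lemma inv_conj:
  assumes "g \<in> carrier F2" "x \<in> carrier F2"
  shows "inv\<^bsub>F2\<^esub> (g \<otimes>\<^bsub>F2\<^esub> x \<otimes>\<^bsub>F2\<^esub> inv\<^bsub>F2\<^esub> g) = g \<otimes>\<^bsub>F2\<^esub> inv\<^bsub>F2\<^esub> x \<otimes>\<^bsub>F2\<^esub> inv\<^bsub>F2\<^esub> g"
  using assms by (simp add: F.inv_mult_group F.m_assoc)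

lemma comm_conj:
  assumes "g \<in> carrier F2" "x \<in> carrier F2" "y \<in> carrier F2"
  shows "g \<otimes>\<^bsub>F2\<^esub> (x \<otimes>\<^bsub>F2\<^esub> y \<otimes>\<^bsub>F2\<^esub> inv\<^bsub>F2\<^esub> x \<otimes>\<^bsub>F2\<^esub> inv\<^bsub>F2\<^esub> y) \<otimes>\<^bsub>F2\<^esub> inv\<^bsub>F2\<^esub> g =
    (g \<otimes>\<^bsub>F2\<^esub> x \<otimes>\<^bsub>F2\<^esub> inv\<^bsub>F2\<^esub> g) \<otimes>\<^bsub>F2\<^esub> (g \<otimes>\<^bsub>F2\<^esub> y \<otimes>\<^bsub>F2\<^esub> inv\<^bsub>F2\<^esub> g)
    \<otimes>\<^bsub>F2\<^esub> inv\<^bsub>F2\<^esub> (g \<otimes>\<^bsub>F2\<^esub> x \<otimes>\<^bsub>F2\<^esub> inv\<^bsub>F2\<^esub> g)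
    \<otimes>\<^bsub>F2\<^esub> inv\<^bsub>F2\<^esub> (g \<otimes>\<^bsub>F2\<^esub> y \<otimes>\<^bsub>F2\<^esub> inv\<^bsub>F2\<^esub> g)"
  using assms by (simp only: inv_conj) (simp add: F.m_assoc canc)

lemma lcs_aux_normal: "lcs_aux k \<lhd> F2"
proof (induction k)
  case 0 then show ?case by (simp add: F.normal_self)
next
  case (Suc k)
  interpret N: normal "lcs_aux k" F2 by (rule Suc)
  show ?case unfolding lcs_aux.simps
  proof (rule F.normal_generateI)
    show "{x \<otimes>\<^bsub>F2\<^esub> y \<otimes>\<^bsub>F2\<^esub> inv\<^bsub>F2\<^esub> x \<otimes>\<^bsub>F2\<^esub> inv\<^bsub>F2\<^esub> y | x y. x \<in> lcs_aux k \<and> y \<in> carrier F2}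
      \<subseteq> carrier F2" using N.subset by auto
  next
    fix h g assume h: "h \<in> {x \<otimes>\<^bsub>F2\<^esub> y \<otimes>\<^bsub>F2\<^esub> inv\<^bsub>F2\<^esub> x \<otimes>\<^bsub>F2\<^esub> inv\<^bsub>F2\<^esub> y | x y. x \<in> lcs_aux k \<and> y \<in> carrier F2}"
      and g: "g \<in> carrier F2"
    then obtain x y where xy: "h = x \<otimes>\<^bsub>F2\<^esub> y \<otimes>\<^bsub>F2\<^esub> inv\<^bsub>F2\<^esub> x \<otimes>\<^bsub>F2\<^esub> inv\<^bsub>F2\<^esub> y"
      "x \<in> lcs_aux k" "y \<in> carrier F2" by blast
    have xc: "x \<in> carrier F2" using xy(2) N.subset by auto
    have "g \<otimes>\<^bsub>F2\<^esub> x \<otimes>\<^bsub>F2\<^esub> inv\<^bsub>F2\<^esub> g \<in> lcs_aux k"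
      using N.inv_op_closed2 xy(2) g by blast
    moreover have "g \<otimes>\<^bsub>F2\<^esub> y \<otimes>\<^bsub>F2\<^esub> inv\<^bsub>F2\<^esub> g \<in> carrier F2" using g xy(3) by simp
    ultimately show "g \<otimes>\<^bsub>F2\<^esub> h \<otimes>\<^bsub>F2\<^esub> inv\<^bsub>F2\<^esub> g \<in>
      {x \<otimes>\<^bsub>F2\<^esub> y \<otimes>\<^bsub>F2\<^esub> inv\<^bsub>F2\<^esub> x \<otimes>\<^bsub>F2\<^esub> inv\<^bsub>F2\<^esub> y | x y. x \<in> lcs_aux k \<and> y \<in> carrier F2}"
      using comm_conj[OF g xc xy(3)] xy(1) by blast
  qed
qed

lemma gens: "gen_a \<in> carrier F2" "gen_b \<in> carrier F2"
  by (simp_all add: F2_def reduced_red gen_a_def gen_b_def)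

lemma ab_carrier: "fst (ab_seq n) \<in> carrier F2 \<and> snd (ab_seq n) \<in> carrier F2"
  by (induction n) (simp_all add: gens)

lemma ab_rel: "\<exists>g \<in> carrier F2. b_seq n = g \<otimes>\<^bsub>F2\<^esub> inv\<^bsub>F2\<^esub> (a_seq n) \<otimes>\<^bsub>F2\<^esub> inv\<^bsub>F2\<^esub> g"
proof (cases n)
  case 0
  show ?thesis using gens 0
    by (intro bexI[of _ gen_a]) (simp_all add: a_seq_def b_seq_def F.inv_inv)
next
  case (Suc m)
  have c: "fst (ab_seq m) \<in> carrier F2" "snd (ab_seq m) \<in> carrier F2" using ab_carrier by auto
  show ?thesis using c Suc
    by (intro bexI[of _ "inv\<^bsub>F2\<^esub> fst (ab_seq m)"])
       (simp_all add: a_seq_def b_seq_def F.inv_inv F.inv_mult_group F.m_assoc)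
qed

lemma conj_mem:
  assumes "N \<lhd> F2" "g \<in> carrier F2" "w \<in> carrier F2"
  shows "(g \<otimes>\<^bsub>F2\<^esub> inv\<^bsub>F2\<^esub> w \<otimes>\<^bsub>F2\<^esub> inv\<^bsub>F2\<^esub> g \<in> N) = (w \<in> N)"
proof -
  interpret N: normal N F2 by (rule assms(1))
  show ?thesis
  proof
    assume "w \<in> N"
    then show "g \<otimes>\<^bsub>F2\<^esub> inv\<^bsub>F2\<^esub> w \<otimes>\<^bsub>F2\<^esub> inv\<^bsub>F2\<^esub> g \<in> N"
      using N.inv_op_closed2 assms by blast
  next
    assume h: "g \<otimes>\<^bsub>F2\<^esub> inv\<^bsub>F2\<^esub> w \<otimes>\<^bsub>F2\<^esub> inv\<^bsub>F2\<^esub> g \<in> N"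
    have "inv\<^bsub>F2\<^esub> g \<otimes>\<^bsub>F2\<^esub> (g \<otimes>\<^bsub>F2\<^esub> inv\<^bsub>F2\<^esub> w \<otimes>\<^bsub>F2\<^esub> inv\<^bsub>F2\<^esub> g) \<otimes>\<^bsub>F2\<^esub> inv\<^bsub>F2\<^esub> (inv\<^bsub>F2\<^esub> g) \<in> N"
      using N.inv_op_closed2[OF F.inv_closed[OF assms(2)] h] .
    also have "inv\<^bsub>F2\<^esub> g \<otimes>\<^bsub>F2\<^esub> (g \<otimes>\<^bsub>F2\<^esub> inv\<^bsub>F2\<^esub> w \<otimes>\<^bsub>F2\<^esub> inv\<^bsub>F2\<^esub> g) \<otimes>\<^bsub>F2\<^esub> inv\<^bsub>F2\<^esub> (inv\<^bsub>F2\<^esub> g)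
       = inv\<^bsub>F2\<^esub> w"
      using assms by (simp add: F.m_assoc F.inv_inv canc)
    finally have "inv\<^bsub>F2\<^esub> (inv\<^bsub>F2\<^esub> w) \<in> N" by (rule N.m_inv_closed)
    then show "w \<in> N" using assms by (simp add: F.inv_inv)
  qed
qed

theorem corollary2p4:
  fixes n :: nat
  shows "gamma_deg (a_seq n) = gamma_deg (b_seq n)"
proof -
  obtain g where g: "g \<in> carrier F2" "b_seq n = g \<otimes>\<^bsub>F2\<^esub> inv\<^bsub>F2\<^esub> (a_seq n) \<otimes>\<^bsub>F2\<^esub> inv\<^bsub>F2\<^esub> g"
    using ab_rel by blast
  have a: "a_seq n \<in> carrier F2" using ab_carrier by (simp add: a_seq_def)
  have "\<And>m. (b_seq n \<in> lcs m) = (a_seq n \<in> lcs m)"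
    unfolding lcs_def g(2) using conj_mem[OF lcs_aux_normal g(1) a] by blast
  then show ?thesis unfolding gamma_deg_def by simp
qed

end
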